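(* Let $W$ be a finite-dimensional vector space over $\mathbb{F}_q$ and let $\mathcal{C}$ be a code (a set of subspaces of $W$) with $|\mathcal{C}|\ge 2$. Let $D(\mathcal{C})=\min_{X,Y\in\mathcal{C},X\ne Y} d(X,Y)$ and $\ell(\mathcal{C})=\max_{X\in\mathcal{C}}\dim X$, where $d(A,B)=\dim(A+B)-\dim(A\cap B)$. Let $V\in\mathcal{C}$, let $k\ge 0$ be an integer, and let $V'$ be a subspace of $V$ such that $V'$ is a $k$-dimensional subspace of $V$ if $\dim V>k$, and $V'=V$ otherwise. Let $E$ be a subspace of $W$ with $E\cap V'=\{0\}$ and $\dim E=t$, and let $U=V'\oplus E$. Let $\rho=\max\{0,\ell(\mathcal{C})-k\}$. If $2(t+\rho)<D(\mathcal{C})$, then $d(U,V)<d(U,T)$ for every $T\in\mathcal{C}$ with $T\ne V$; i.e., a minimum distance decoder (which returns a codeword nearest to $U$ in the metric $d$) returns $V$.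
   Context: A code is a nonempty set of subspaces of $W$. A minimum distance decoder takes a subspace $U$ and returns a codeword $V\in\mathcal{C}$ with $d(U,V)\le d(U,V'')$ for all $V''\in\mathcal{C}$. *)

theory Defs
  imports "HOL-Analysis.Cartesian_Space"
begin

text \<open>The ambient space W is modelled as the coordinate space F_q^n = 'a^'n with
  'a a finite field (every finite-dimensional space over F_q is isomorphic to one).\<close>

definition subspace_sum :: "('a::field^'n) set \<Rightarrow> ('a^'n) set \<Rightarrow> ('a^'n) set" where
  "subspace_sum A B = {x + y | x y. x \<in> A \<and> y \<in> B}"

definition subspace_dist :: "('a::field^'n) set \<Rightarrow> ('a^'n) set \<Rightarrow> nat" where
  "subspace_dist A B = vec.dim (subspace_sum A B) - vec.dim (A \<inter> B)"

definition min_dist :: "('a::field^'n) set set \<Rightarrow> nat" where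
  "min_dist C = Min {subspace_dist X Y | X Y. X \<in> C \<and> Y \<in> C \<and> X \<noteq> Y}"

definition max_dim :: "('a::field^'n) set set \<Rightarrow> nat" where
  "max_dim C = Max (vec.dim ` C)"

end

theory Submission
  imports Defs
begin

lemma dist_formula:
  fixes A B :: "('a::field^'n) set"
  assumes "vec.subspace A" "vec.subspace B"
  shows "int (subspace_dist A B) = int (vec.dim A) + int (vec.dim B) - 2 * int (vec.dim (A \<inter> B))"
proof -
  have s: "vec.dim (subspace_sum A B) + vec.dim (A \<inter> B) = vec.dim A + vec.dim B"
    using vec.dim_sums_Int[OF assms] unfolding subspace_sum_def by simp
  have "A \<inter> B \<subseteq> subspace_sum A B"
    unfolding subspace_sum_def using vec.subspace_0[OF assms(2)] by force
  hence "vec.dim (A \<inter> B) \<le> vec.dim (subspace_sum A B)" by (rule vec.dim_subset)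
  thus ?thesis using s unfolding subspace_dist_def by linarith
qed

lemma sum_sub: "vec.subspace A \<Longrightarrow> vec.subspace B \<Longrightarrow> vec.subspace (subspace_sum A B)"
  unfolding subspace_sum_def by (rule vec.subspace_sums)

lemma tri:
  fixes A B X :: "('a::field^'n) set"
  assumes A: "vec.subspace A" and B: "vec.subspace B" and X: "vec.subspace X"
  shows "int (subspace_dist A X) \<le> int (subspace_dist A B) + int (subspace_dist B X)"
proof -
  let ?P = "A \<inter> B" and ?Q = "B \<inter> X"
  have sP: "vec.subspace ?P" and sQ: "vec.subspace ?Q"
    using A B X vec.subspace_inter by auto
  have s: "vec.dim (subspace_sum ?P ?Q) + vec.dim (?P \<inter> ?Q) = vec.dim ?P + vec.dim ?Q"
    using vec.dim_sums_Int[OF sP sQ] unfolding subspace_sum_def by simp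
  have "subspace_sum ?P ?Q \<subseteq> B"
    unfolding subspace_sum_def using vec.subspace_add[OF B] by auto
  hence "vec.dim (subspace_sum ?P ?Q) \<le> vec.dim B" by (rule vec.dim_subset)
  moreover have "vec.dim (?P \<inter> ?Q) \<le> vec.dim (A \<inter> X)" by (rule vec.dim_subset) auto
  ultimately have "vec.dim ?P + vec.dim ?Q \<le> vec.dim B + vec.dim (A \<inter> X)" using s by linarith
  thus ?thesis using dist_formula[OF A B] dist_formula[OF B X] dist_formula[OF A X] by linarith
qed

lemma dist_sym: "subspace_dist A B = subspace_dist B A"
proof -
  have "subspace_sum A B = subspace_sum B A" unfolding subspace_sum_def by (metis (no_types, lifting) add.commute)
  thus ?thesis unfolding subspace_dist_def by (simp add: Int_commute)
qed

theorem theorem2: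
  fixes C :: "('a::{field,finite}^'n) set set"
    and V V' E U :: "('a^'n) set"
    and k t :: nat
  assumes code: "\<forall>X\<in>C. vec.subspace X"
    and card2: "card C \<ge> 2"
    and VC: "V \<in> C"
    and V'sub: "vec.subspace V'" "V' \<subseteq> V"
    and V'big: "vec.dim V > k \<Longrightarrow> vec.dim V' = k"
    and V'small: "\<not> vec.dim V > k \<Longrightarrow> V' = V"
    and Esub: "vec.subspace E"
    and Eint: "E \<inter> V' = {0}"
    and Edim: "vec.dim E = t"
    and Udef: "U = subspace_sum V' E"
    and bound: "2 * (t + max 0 (int (max_dim C) - int k)) < int (min_dist C)"
  shows "\<forall>T\<in>C. T \<noteq> V \<longrightarrow> subspace_dist U V < subspace_dist U T"
proof (intro ballI impI)
  fix T assume TC: "T \<in> C" and TV: "T \<noteq> V"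
  have finC: "finite C" using card2 card.infinite by fastforce
  have sV: "vec.subspace V" and sT: "vec.subspace T" using code VC TC by auto
  have sU: "vec.subspace U" using sum_sub[OF V'sub(1) Esub] Udef by simp
  have dU: "vec.dim U = vec.dim V' + t"
    using vec.dim_sums_Int[OF V'sub(1) Esub] Eint Edim Udef unfolding subspace_sum_def
    by (simp add: Int_commute)
  have "V' \<subseteq> U \<inter> V"
  proof
    fix x assume "x \<in> V'"
    hence "x = x + 0" "0 \<in> E" using vec.subspace_0[OF Esub] by auto
    thus "x \<in> U \<inter> V" using \<open>x \<in> V'\<close> V'sub(2) Udef unfolding subspace_sum_def by blast
  qed
  hence "vec.dim V' \<le> vec.dim (U \<inter> V)" by (rule vec.dim_subset)
  hence d1: "int (subspace_dist U V) \<le> int t + int (vec.dim V) - int (vec.dim V')"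
    using dist_formula[OF sU sV] dU by linarith
  have mx: "vec.dim V \<le> max_dim C" unfolding max_dim_def using finC VC by simp
  have d2: "int (subspace_dist U V) \<le> int t + max 0 (int (max_dim C) - int k)"
  proof (cases "vec.dim V > k")
    case True thus ?thesis using d1 V'big mx by linarith
  next
    case False thus ?thesis using d1 V'small by simp
  qed
  have "min_dist C \<le> subspace_dist V T"
    unfolding min_dist_def
  proof (rule Min_le)
    have "{subspace_dist X Y | X Y. X \<in> C \<and> Y \<in> C \<and> X \<noteq> Y} \<subseteq> (\<lambda>(X,Y). subspace_dist X Y) ` (C \<times> C)"
      by auto
    thus "finite {subspace_dist X Y | X Y. X \<in> C \<and> Y \<in> C \<and> X \<noteq> Y}"
      using finC finite_subset by blast
    show "subspace_dist V T \<in> {subspace_dist X Y | X Y. X \<in> C \<and> Y \<in> C \<and> X \<noteq> Y}"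
      using VC TC TV by blast
  qed
  moreover have "int (subspace_dist V T) \<le> int (subspace_dist V U) + int (subspace_dist U T)"
    by (rule tri[OF sV sU sT])
  ultimately have h: "int (min_dist C) \<le> int (subspace_dist U V) + int (subspace_dist U T)"
    using dist_sym[of V U] by linarith
  define r where "r = max 0 (int (max_dim C) - int k)"
  have "int (subspace_dist U V) < int (subspace_dist U T)"
    using h d2 bound unfolding r_def[symmetric] by (smt (verit))
  thus "subspace_dist U V < subspace_dist U T" by simp
qed

end
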